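(* Consider non-adaptive sensing $\bm{y} = \bm{A}\bm{x} + \bm{z}$, where $\bm{z} \sim \mathcal{N}(0, \bm{I}_{M\times M})$, $\bm{x}\in\mathbb{R}^N$ is an arbitrary one-sparse signal whose single nonzero entry equals $\mu>0$, and $\bm{A} = [A_1 \cdots A_N]$ is a real-valued $M \times N$ sensing matrix with $M = T\log_2(N)$ measurements, where $T \geq 1$ is a constant, whose columns satisfy $\|A_i\|_2 \leq \tau$ for all $i$. Let $\epsilon \in (0,1/2)$ be a target probability of error, and suppose $\tau = \Theta(Q^{-1}(\epsilon)/\mu)$. Then any such non-adaptive sensing matrix achieving probability of error at most $\epsilon$ in reconstructing $\bm{x}$ must have $l_0$ cost $\|\bm{A}\|_{0,0} = \Theta(N\log_2(N))$ as $N\to\infty$.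
   Context: The $l_0$ cost of $\bm{A}$ is $\|\bm{A}\|_{0,0} = \sum_{i=1}^N\sum_{j=1}^M \mathbb{I}(A(j,i)\neq 0)$, the number of nonzero entries. $Q(a) = \frac{1}{\sqrt{2\pi}}\int_a^\infty e^{-b^2/2}\,db$ is the Gaussian tail function and $Q^{-1}$ its inverse. A non-adaptive strategy acquires all measurements at once with a fixed matrix $\bm{A}$. Achieving probability of error $\epsilon$ means the support of $\bm{x}$ (equivalently $\bm{x}$) can be decided from $\bm{y}$ with error probability at most $\epsilon$; in particular, for each pair $i\neq j$ the pairwise error of distinguishing $\mu A_i$ from $\mu A_j$ in unit-variance Gaussian noise must be at most $\epsilon$. $F(N)=\Theta(g(N))$ means $C_1 g(N)\le F(N)\le C_2 g(N)$ for positive constants $C_1,C_2$ and all large $N$. *)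

theory Defs
  imports "HOL-Analysis.Analysis"
begin

definition Qfun :: "real \<Rightarrow> real" where
  "Qfun a = (LBINT b:{a..}. exp (- (b^2) / 2)) / sqrt (2 * pi)"

text \<open>Inverse of Q (Q is a bijection from the reals onto (0,1)).\<close>
definition Qinv :: "real \<Rightarrow> real" where
  "Qinv e = (THE a. Qfun a = e)"

text \<open>An M x N real matrix is a function A, entry A j i = A(j,i) (row j < M, column i < N).\<close>

definition col_norm :: "nat \<Rightarrow> (nat \<Rightarrow> nat \<Rightarrow> real) \<Rightarrow> nat \<Rightarrow> real" where
  "col_norm M A i = sqrt (\<Sum>j<M. (A j i)^2)"

definition col_dist :: "nat \<Rightarrow> (nat \<Rightarrow> nat \<Rightarrow> real) \<Rightarrow> nat \<Rightarrow> nat \<Rightarrow> real" where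
  "col_dist M A i k = sqrt (\<Sum>j<M. (A j i - A j k)^2)"

definition l0_cost :: "nat \<Rightarrow> nat \<Rightarrow> (nat \<Rightarrow> nat \<Rightarrow> real) \<Rightarrow> nat" where
  "l0_cost M N A = card {(j, i). j < M \<and> i < N \<and> A j i \<noteq> 0}"

text \<open>Minimal (ML, equal priors) error of distinguishing mu*A_i from mu*A_k in unit-variance
  Gaussian noise: Q(mu * ||A_i - A_k||_2 / 2).\<close>
definition pairwise_error :: "real \<Rightarrow> nat \<Rightarrow> (nat \<Rightarrow> nat \<Rightarrow> real) \<Rightarrow> nat \<Rightarrow> nat \<Rightarrow> real" where
  "pairwise_error \<mu> M A i k = Qfun (\<mu> * col_dist M A i k / 2)"

definition achieves_error :: "real \<Rightarrow> real \<Rightarrow> nat \<Rightarrow> nat \<Rightarrow> (nat \<Rightarrow> nat \<Rightarrow> real) \<Rightarrow> bool" where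
  "achieves_error \<epsilon> \<mu> M N A \<longleftrightarrow>
     (\<forall>i<N. \<forall>k<N. i \<noteq> k \<longrightarrow> pairwise_error \<mu> M A i k \<le> \<epsilon>)"

end

theory Submission
  imports Defs "HOL-Probability.Probability" "HOL-Library.Multiset"
begin


definition E :: "real \<Rightarrow> real" where "E x = exp (- (x^2) / 2)"

lemma E_std: "E x = sqrt (2*pi) * std_normal_density x"
  unfolding E_def std_normal_density_def by simp

lemma E_meas[measurable]: "E \<in> borel_measurable borel"
  unfolding E_def by measurable

lemma intE: "integrable lborel E"
  unfolding E_std by (intro integrable_mult_right) simp

lemma intE_total: "(\<integral>x. E x \<partial>lborel) = sqrt (2*pi)"
  unfolding E_std by simp

lemma intE2: "integrable lborel (\<lambda>x. E x * x^2)"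
proof -
  have "integrable lborel (\<lambda>x. sqrt (2*pi) * (std_normal_density x * x^2))"
    using integrable_std_normal_moment[of 2] by (intro integrable_mult_right) simp
  then show ?thesis unfolding E_std by (simp add: mult.assoc)
qed

lemma intE2_total: "(\<integral>x. E x * x^2 \<partial>lborel) = sqrt (2*pi)"
proof -
  have "(\<integral>x. std_normal_density x * x^(2*1) \<partial>lborel) = 1"
    using std_normal_moment_even[of 1] has_bochner_integral_integral_eq by fastforce
  then have "(\<integral>x. sqrt (2*pi) * (std_normal_density x * x^2) \<partial>lborel) = sqrt (2*pi)"
    by simp
  then show ?thesis unfolding E_std by (simp add: mult.assoc)
qed

lemma E_pos: "E x > 0" unfolding E_def by simp
lemma E_le1: "E x \<le> 1" unfolding E_def by simp

definition I :: "real \<Rightarrow> real" where "I a = (\<integral>x. indicator {a..} x * E x \<partial>lborel)"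

lemma Qfun_I: "Qfun a = I a / sqrt (2*pi)"
  unfolding Qfun_def I_def E_def set_lebesgue_integral_def by simp

lemma int_ind: "S \<in> sets borel \<Longrightarrow> integrable lborel (\<lambda>x. indicator S x * E x)"
  using integrable_mult_indicator[of S lborel E] intE by simp

lemma I_diff: assumes "a \<le> b" shows "I a - I b = (\<integral>x. indicator {a..<b} x * E x \<partial>lborel)"
proof -
  have "\<And>x. indicator {a..} x * E x = indicator {a..<b} x * E x + indicator {b..} x * E x"
    using assms by (auto simp: indicator_def)
  then have "I a = (\<integral>x. indicator {a..<b} x * E x \<partial>lborel) + I b"
    unfolding I_def by (simp add: int_ind)
  then show ?thesis by simp
qed

lemma Ico_bounds: assumes "a \<le> b"
  shows "(\<integral>x. indicator {a..<b} x * E x \<partial>lborel) \<le> b - a"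
    "exp (-(a^2+b^2)/2) * (b - a) \<le> (\<integral>x. indicator {a..<b} x * E x \<partial>lborel)"
proof -
  have m: "measure lborel {a..<b} = b - a" using assms by simp
  have ii: "integrable lborel (indicator {a..<b} :: real \<Rightarrow> real)" using assms by (intro integrable_real_indicator) (auto simp: emeasure_lborel_Ico)
  have "(\<integral>x. indicator {a..<b} x * E x \<partial>lborel) \<le> (\<integral>x. indicator {a..<b} x \<partial>lborel)"
    by (intro integral_mono int_ind ii) (auto simp: indicator_def E_le1)
  then show "(\<integral>x. indicator {a..<b} x * E x \<partial>lborel) \<le> b - a" using m by simp
  have le: "exp (-(a^2+b^2)/2) \<le> E x" if "x \<in> {a..<b}" for x
  proof -
    have "x^2 \<le> a^2 + b^2"
    proof (cases "0 \<le> x")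
      case True then have "x*x \<le> b*b" using that by (intro mult_mono) auto
      then show ?thesis by (simp add: power2_eq_square add_increasing)
    next
      case False then have "(-x)*(-x) \<le> (-a)*(-a)" using that by (intro mult_mono) auto
      then show ?thesis by (simp add: power2_eq_square add_increasing2)
    qed
    then show ?thesis unfolding E_def by simp
  qed
  have "(\<integral>x. indicator {a..<b} x * exp (-(a^2+b^2)/2) \<partial>lborel) \<le> (\<integral>x. indicator {a..<b} x * E x \<partial>lborel)"
  proof (intro integral_mono int_ind)
    show "integrable lborel (\<lambda>x. indicator {a..<b} x * exp (-(a^2+b^2)/2))"
      using ii by (intro integrable_mult_left)
    fix x show "indicator {a..<b} x * exp (-(a^2+b^2)/2) \<le> indicator {a..<b} x * E x"
      using le[of x] by (cases "x \<in> {a..<b}") auto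
  qed auto
  then show "exp (-(a^2+b^2)/2) * (b - a) \<le> (\<integral>x. indicator {a..<b} x * E x \<partial>lborel)"
    using m by (simp add: mult.commute)
qed

lemma I_lip: "a \<le> b \<Longrightarrow> 0 \<le> I a - I b \<and> I a - I b \<le> b - a"
  using Ico_bounds[of a b] I_diff[of a b]
  by (smt (verit) exp_gt_zero mult_nonneg_nonneg)

lemma I_strict: "a < b \<Longrightarrow> I b < I a"
  using Ico_bounds(2)[of a b] I_diff[of a b]
  by (smt (verit) exp_gt_zero mult_pos_pos)

lemma I_cont: "continuous_on S I"
proof -
  have "\<bar>I x - I y\<bar> \<le> \<bar>x - y\<bar>" for x y
    using I_lip[of x y] I_lip[of y x] by (cases "x \<le> y") auto
  then have "lipschitz_on 1 S I" by (intro lipschitz_onI) (auto simp: dist_real_def)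
  then show ?thesis using lipschitz_on_continuous_on by blast
qed

lemma I_zero: "I 0 = sqrt (2*pi) / 2"
proof -
  have a: "(\<integral>x. indicator {0..} x * E x \<partial>lborel) = \<bar>-1\<bar> *\<^sub>R (\<integral>x. indicator {0..} (0 + -1*x) * E (0 + -1*x) \<partial>lborel)"
    by (rule lborel_integral_real_affine) simp
  have "\<And>x. indicator {0..} (0 + -1*x) * E (0 + -1*x) = indicator {..0} x * (E x::real)"
    by (auto simp: indicator_def E_def)
  with a have b: "I 0 = (\<integral>x. indicator {..0} x * E x \<partial>lborel)" unfolding I_def by simp
  have c: "(\<integral>x. indicator {..0} x * E x \<partial>lborel) = (\<integral>x. indicator {..<0} x * E x \<partial>lborel)"
  proof (rule integral_cong_AE)
    show "AE x in lborel. indicator {..0} x * E x = indicator {..<0} x * E x"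
      using AE_lborel_singleton[of 0] by eventually_elim (auto simp: indicator_def)
  qed measurable
  have "\<And>x. E x = indicator {..<0} x * E x + indicator {0..} x * E x"
    by (auto simp: indicator_def)
  then have "(\<integral>x. E x \<partial>lborel) = (\<integral>x. indicator {..<0} x * E x + indicator {0..} x * E x \<partial>lborel)"
    by simp
  also have "\<dots> = (\<integral>x. indicator {..<0} x * E x \<partial>lborel) + I 0"
    unfolding I_def by (simp add: int_ind)
  finally show ?thesis using intE_total b c by simp
qed

lemma I_tail: assumes "a > 0" shows "I a \<le> sqrt (2*pi) / a^2"
proof -
  have "I a \<le> (\<integral>x. E x * x^2 / a^2 \<partial>lborel)"
    unfolding I_def
  proof (intro integral_mono int_ind)
    show "integrable lborel (\<lambda>x. E x * x^2 / a^2)" using intE2 by simp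
    fix x show "indicator {a..} x * E x \<le> E x * x^2 / a^2"
    proof (cases "x \<ge> a")
      case True
      then have "1 \<le> x^2/a^2" using assms by (simp add: power_mono)
      then show ?thesis using True E_pos[of x] 
        by (simp add: indicator_def) (metis mult.right_neutral mult_left_mono less_imp_le times_divide_eq_right)
    qed (auto simp: indicator_def E_pos less_imp_le)
  qed auto
  also have "\<dots> = sqrt (2*pi) / a^2" using intE2_total by simp
  finally show ?thesis .
qed

lemma Qfun_strict: "a < b \<Longrightarrow> Qfun b < Qfun a"
  unfolding Qfun_I using I_strict by (simp add: divide_strict_right_mono)

lemma Qfun_zero: "Qfun 0 = 1/2"
  unfolding Qfun_I I_zero by simp

lemma Qfun_tail: "a > 0 \<Longrightarrow> Qfun a \<le> 1 / a^2"
  unfolding Qfun_I using I_tail[of a] by (simp add: divide_le_eq field_simps)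

lemma Qfun_cont: "continuous_on S Qfun"
  unfolding Qfun_I[abs_def] by (intro continuous_intros I_cont) simp

lemma Qinv_prop:
  assumes "0 < e" "e < 1/2"
  shows "0 < Qinv e" "Qfun (Qinv e) = e" "\<And>x. Qfun x \<le> e \<Longrightarrow> Qinv e \<le> x"
proof -
  define a0 where "a0 = sqrt (2/e)"
  have a0: "a0 > 0" "a0^2 = 2/e" using assms unfolding a0_def by auto
  have "Qfun a0 \<le> e/2" using Qfun_tail[OF a0(1)] a0(2) by simp
  then obtain q where q: "0 \<le> q" "q \<le> a0" "Qfun q = e"
  proof -
    have "\<exists>x. 0 \<le> x \<and> x \<le> a0 \<and> Qfun x = e"
      by (rule IVT2') (use \<open>Qfun a0 \<le> e/2\<close> Qfun_zero assms a0 Qfun_cont in auto)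
    then show ?thesis using that by blast
  qed
  have uniq: "Qfun y = e \<Longrightarrow> y = q" for y
  proof (rule ccontr)
    assume "Qfun y = e" "y \<noteq> q"
    then consider "y < q" | "q < y" by linarith
    then show False using Qfun_strict[of y q] Qfun_strict[of q y] q(3) \<open>Qfun y = e\<close> by cases auto
  qed
  have "Qinv e = q" unfolding Qinv_def by (rule the_equality[where P="\<lambda>a. Qfun a = e", OF q(3) uniq])
  then show "Qfun (Qinv e) = e" using q by simp
  show "0 < Qinv e" using \<open>Qinv e = q\<close> q Qfun_zero assms proof -
    have "q \<noteq> 0" using q(3) Qfun_zero assms by auto
    then show ?thesis using q(1) \<open>Qinv e = q\<close> by linarith
  qed
  fix x assume "Qfun x \<le> e"
  show "Qinv e \<le> x" proof (rule ccontr)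
    assume "\<not> Qinv e \<le> x"
    then have "x < q" using \<open>Qinv e = q\<close> by simp
    then show False using Qfun_strict[of x q] q(3) \<open>Qfun x \<le> e\<close> by simp
  qed
qed



definition Vset :: "nat \<Rightarrow> nat \<Rightarrow> (nat \<Rightarrow> int) set" where
  "Vset M L = {v. (\<forall>j\<ge>M. v j = 0) \<and> (\<Sum>j<M. \<bar>v j\<bar>) \<le> int L}"

definition psi :: "nat \<Rightarrow> nat \<Rightarrow> (nat \<Rightarrow> int) \<Rightarrow> (nat \<times> bool) option multiset" where
  "psi M L v = (\<Sum>j<M. replicate_mset (nat (v j)) (Some (j,True)) + replicate_mset (nat (- v j)) (Some (j,False)))
     + replicate_mset (L - nat (\<Sum>j<M. \<bar>v j\<bar>)) None"

lemma psi_count: "j < M \<Longrightarrow> count (psi M L v) (Some (j,True)) = nat (v j)"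
   "j < M \<Longrightarrow> count (psi M L v) (Some (j,False)) = nat (- v j)"
proof -
  assume j: "j < M"
  have "(\<Sum>a<M. count (replicate_mset (nat (v a)) (Some (a,True)) + replicate_mset (nat (- v a)) (Some (a,False))) (Some (j,True)))
     = (\<Sum>a<M. if a = j then nat (v j) else 0)" by (intro sum.cong) auto
  then show "count (psi M L v) (Some (j,True)) = nat (v j)"
    using j unfolding psi_def by (simp add: count_sum)
next
  assume j: "j < M"
  have "(\<Sum>a<M. count (replicate_mset (nat (v a)) (Some (a,True)) + replicate_mset (nat (- v a)) (Some (a,False))) (Some (j,False)))
     = (\<Sum>a<M. if a = j then nat (- v j) else 0)" by (intro sum.cong) auto
  then show "count (psi M L v) (Some (j,False)) = nat (- v j)"
    using j unfolding psi_def by (simp add: count_sum)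
qed

lemma psi_inj: "inj_on (psi M L) (Vset M L)"
proof (rule inj_onI)
  fix v w assume v: "v \<in> Vset M L" and w: "w \<in> Vset M L" and eq: "psi M L v = psi M L w"
  show "v = w"
  proof
    fix j show "v j = w j"
    proof (cases "j < M")
      case True
      have "nat (v j) = nat (w j)" "nat (- v j) = nat (- w j)"
        using psi_count[OF True, of L v] psi_count[OF True, of L w] eq by metis+
      then show ?thesis by linarith
    next
      case False then show ?thesis using v w unfolding Vset_def by auto
    qed
  qed
qed

lemma psi_size: assumes "v \<in> Vset M L" shows "size (psi M L v) = L"
proof -
  have "size (\<Sum>j<M. replicate_mset (nat (v j)) (Some (j,True)) + replicate_mset (nat (- v j)) (Some (j,False)))
     = (\<Sum>j<M. nat (v j) + nat (- v j))" by simp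
  also have "\<dots> = (\<Sum>j<M. nat \<bar>v j\<bar>)" by (intro sum.cong) auto
  also have "\<dots> = nat (\<Sum>j<M. \<bar>v j\<bar>)"
  proof -
    have "int (\<Sum>j<M. nat \<bar>v j\<bar>) = (\<Sum>j<M. \<bar>v j\<bar>)" by (simp add: of_nat_sum)
    then show ?thesis by (metis nat_int)
  qed
  finally have "size (\<Sum>j<M. replicate_mset (nat (v j)) (Some (j,True)) + replicate_mset (nat (- v j)) (Some (j,False)))
     = nat (\<Sum>j<M. \<bar>v j\<bar>)" .
  moreover have "nat (\<Sum>j<M. \<bar>v j\<bar>) \<le> L" using assms unfolding Vset_def by auto
  ultimately show ?thesis unfolding psi_def by simp
qed

lemma Vset_card: "finite (Vset M L) \<and> card (Vset M L) \<le> (2*M + L) choose L"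
proof -
  define Aset where "Aset = insert None (Some ` ({..<M} \<times> (UNIV::bool set)))"
  have fA: "finite Aset" unfolding Aset_def by simp
  have cA: "card Aset = 2*M + 1"
  proof -
    have "card (Some ` ({..<M} \<times> (UNIV::bool set))) = 2*M"
      by (subst card_image) (auto simp: card_cartesian_product)
    then show ?thesis unfolding Aset_def by (subst card_insert_disjoint) auto
  qed
  have sub: "psi M L ` Vset M L \<subseteq> multisets_of_size Aset L"
  proof
    fix X assume "X \<in> psi M L ` Vset M L"
    then obtain v where v: "v \<in> Vset M L" "X = psi M L v" by blast
    have "set_mset X \<subseteq> Aset" unfolding v(2) psi_def Aset_def
      by (auto simp: set_mset_sum split: if_splits)
    then show "X \<in> multisets_of_size Aset L" using psi_size[OF v(1)] v(2)
      unfolding multisets_of_size_def by simp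
  qed
  have fin: "finite (multisets_of_size Aset L)" using fA by blast
  have fV: "finite (Vset M L)"
    using finite_imageD[OF finite_subset[OF sub fin] psi_inj] .
  have "card (Vset M L) \<le> card (multisets_of_size Aset L)"
    using card_inj_on_le[OF psi_inj sub fin] .
  also have "\<dots> = (2*M + L) choose L" using card_multisets_of_size[OF fA] cA by simp
  finally show ?thesis using fV by simp
qed



lemma floor_eq_close: fixes x y :: real assumes "\<lfloor>x\<rfloor> = \<lfloor>y\<rfloor>" shows "\<bar>x - y\<bar> < 1"
proof -
  have "x - 1 < of_int \<lfloor>x\<rfloor>" "of_int \<lfloor>x\<rfloor> \<le> x" "y - 1 < of_int \<lfloor>y\<rfloor>" "of_int \<lfloor>y\<rfloor> \<le> y"
    by linarith+
  then show ?thesis using assms by (simp add: abs_less_iff) linarith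
qed

lemma floor_abs_bound: fixes y :: real shows "real_of_int \<bar>\<lfloor>y\<rfloor>\<bar> \<le> y^2/2 + 3/2"
proof -
  have "real_of_int \<bar>\<lfloor>y\<rfloor>\<bar> \<le> \<bar>y\<bar> + 1" by linarith
  moreover have "\<bar>y\<bar> \<le> (y^2 + 1)/2"
  proof -
    have "0 \<le> (\<bar>y\<bar> - 1)^2" by simp
    then show ?thesis by (simp add: power2_eq_square algebra_simps)
  qed
  ultimately have "real_of_int \<bar>\<lfloor>y\<rfloor>\<bar> \<le> (y^2 + 1)/2 + 1" by linarith
  also have "(y^2 + 1)/2 + 1 = y^2/2 + 3/2" by (simp add: field_simps)
  finally show ?thesis .
qed

lemma light_card:
  fixes A :: "nat \<Rightarrow> nat \<Rightarrow> real" and S :: "nat set" and \<delta> \<tau> \<rho> :: real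
  assumes \<delta>: "\<delta> > 0" and k: "k \<ge> 1" and \<tau>: "\<tau> \<le> \<rho> * \<delta>" and \<beta>: "\<rho>^2 + 3/2 \<le> real \<beta>"
    and norm: "\<forall>i\<in>S. col_norm M A i \<le> \<tau>"
    and dist: "\<forall>i\<in>S. \<forall>i'\<in>S. i \<noteq> i' \<longrightarrow> \<delta> \<le> col_dist M A i i'"
    and sp: "\<forall>i\<in>S. card {j. j<M \<and> A j i \<noteq> 0} \<le> k"
  shows "card S \<le> (2*M + \<beta>*k) choose (\<beta>*k)"
proof (cases "S = {}")
  case True then show ?thesis by simp
next
  case False
  then obtain i0 where "i0 \<in> S" by blast
  have "0 \<le> col_norm M A i0" unfolding col_norm_def by (simp add: sum_nonneg)
  then have \<tau>0: "0 \<le> \<tau>" using norm \<open>i0 \<in> S\<close> by force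
  define h where "h = \<delta> / sqrt (2 * real k)"
  have hpos: "h > 0" using \<delta> k unfolding h_def by simp
  have h2: "h^2 = \<delta>^2 / (2 * real k)" unfolding h_def using k by (simp add: power_divide)
  define \<phi> where "\<phi> i = (\<lambda>j. if j < M then \<lfloor>A j i / h\<rfloor> else 0)" for i
  have inj: "inj_on \<phi> S"
  proof (rule inj_onI, rule ccontr)
    fix i i' assume i: "i \<in> S" and i': "i' \<in> S" and eq: "\<phi> i = \<phi> i'" and ne: "i \<noteq> i'"
    define U where "U = {j. j<M \<and> A j i \<noteq> 0} \<union> {j. j<M \<and> A j i' \<noteq> 0}"
    have fU: "finite U" unfolding U_def by auto
    have cU: "card U \<le> 2*k"
    proof -
      have "card {j. j<M \<and> A j i \<noteq> 0} \<le> k" "card {j. j<M \<and> A j i' \<noteq> 0} \<le> k" using sp i i' by auto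
      then show ?thesis
        using card_Un_le[of "{j. j<M \<and> A j i \<noteq> 0}" "{j. j<M \<and> A j i' \<noteq> 0}"]
        unfolding U_def by linarith
    qed
    have close: "(A j i - A j i')^2 < h^2" if "j < M" for j
    proof -
      have "\<lfloor>A j i / h\<rfloor> = \<lfloor>A j i' / h\<rfloor>" using fun_cong[OF eq, of j] that unfolding \<phi>_def by simp
      then have "\<bar>A j i / h - A j i' / h\<bar> < 1" by (rule floor_eq_close)
      moreover have "A j i / h - A j i' / h = (A j i - A j i')/h" by (simp add: diff_divide_distrib)
      ultimately have "\<bar>A j i - A j i'\<bar> / h < 1" using hpos by (simp add: abs_divide)
      then have "\<bar>A j i - A j i'\<bar> < h" using hpos by (simp add: divide_less_eq)
      then have "\<bar>A j i - A j i'\<bar>^2 < h^2" by (intro power_strict_mono) auto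
      then show ?thesis by simp
    qed
    have sumU: "(\<Sum>j<M. (A j i - A j i')^2) = (\<Sum>j\<in>U. (A j i - A j i')^2)"
      by (rule sum.mono_neutral_right) (auto simp: U_def)
    have "(\<Sum>j<M. (A j i - A j i')^2) < \<delta>^2"
    proof (cases "U = {}")
      case True then show ?thesis using sumU \<delta> by simp
    next
      case False
      have "(\<Sum>j\<in>U. (A j i - A j i')^2) < (\<Sum>j\<in>U. h^2)"
        by (rule sum_strict_mono[OF fU False]) (auto simp: U_def intro: close)
      also have "\<dots> = real (card U) * h^2" by simp
      also have "\<dots> \<le> real (2*k) * h^2" using cU by (intro mult_right_mono) auto
      also have "\<dots> = \<delta>^2" using h2 k by simp
      finally show ?thesis using sumU by simp
    qed
    then have "sqrt (\<Sum>j<M. (A j i - A j i')^2) < sqrt (\<delta>^2)" by (simp only: real_sqrt_less_iff)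
    then have "col_dist M A i i' < \<delta>" unfolding col_dist_def using \<delta> by simp
    then show False using dist i i' ne by force
  qed
  have into: "\<phi> ` S \<subseteq> Vset M (\<beta>*k)"
  proof
    fix v assume "v \<in> \<phi> ` S"
    then obtain i where i: "i \<in> S" and v: "v = \<phi> i" by blast
    have ss: "(\<Sum>j<M. (A j i)^2) \<le> \<tau>^2"
    proof -
      have "sqrt (\<Sum>j<M. (A j i)^2) \<le> \<tau>" using norm i unfolding col_norm_def by blast
      moreover have "0 \<le> sqrt (\<Sum>j<M. (A j i)^2)" by (simp add: sum_nonneg)
      ultimately have "(sqrt (\<Sum>j<M. (A j i)^2))^2 \<le> \<tau>^2" by (intro power_mono) auto
      then show ?thesis by (simp add: sum_nonneg)
    qed
    have pt: "real_of_int \<bar>v j\<bar> \<le> (A j i)^2 / (2*h^2) + (if A j i \<noteq> 0 then 3/2 else 0)" if "j < M" for j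
    proof (cases "A j i = 0")
      case True then show ?thesis using that unfolding v \<phi>_def by simp
    next
      case False
      have "real_of_int \<bar>v j\<bar> \<le> (A j i / h)^2/2 + 3/2" using that floor_abs_bound unfolding v \<phi>_def by simp
      then show ?thesis using False by (simp add: power_divide)
    qed
    have "real_of_int (\<Sum>j<M. \<bar>v j\<bar>) = (\<Sum>j<M. real_of_int \<bar>v j\<bar>)" by simp
    also have "\<dots> \<le> (\<Sum>j<M. (A j i)^2 / (2*h^2) + (if A j i \<noteq> 0 then 3/2 else 0))"
      by (intro sum_mono pt) auto
    also have "\<dots> = (\<Sum>j<M. (A j i)^2) / (2*h^2) + 3/2 * real (card {j. j<M \<and> A j i \<noteq> 0})"
    proof -
      have se: "{j\<in>{..<M}. A j i \<noteq> 0} = {j. j<M \<and> A j i \<noteq> 0}" by auto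
      have "(\<Sum>j<M. (if A j i \<noteq> 0 then 3/2 else 0::real)) = (\<Sum>j\<in>{j\<in>{..<M}. A j i \<noteq> 0}. 3/2)"
        by (rule sum.inter_filter[symmetric]) simp
      also have "\<dots> = 3/2 * real (card {j. j<M \<and> A j i \<noteq> 0})" unfolding se by simp
      finally have eq: "(\<Sum>j<M. (if A j i \<noteq> 0 then 3/2 else 0::real)) = 3/2 * real (card {j. j<M \<and> A j i \<noteq> 0})" .
      show ?thesis by (simp only: sum.distrib sum_divide_distrib eq)
    qed
    also have "\<dots> \<le> \<tau>^2 / (2*h^2) + 3/2 * real k"
      using ss sp i hpos by (intro add_mono divide_right_mono) auto
    also have "\<tau>^2 / (2*h^2) = \<tau>^2 * real k / \<delta>^2" using h2 \<delta> k hpos by (simp add: field_simps)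
    also have "\<dots> \<le> \<rho>^2 * real k"
    proof -
      have "\<tau>^2 \<le> (\<rho>*\<delta>)^2" using \<tau> \<tau>0 by (intro power_mono) auto
      then have "\<tau>^2 / \<delta>^2 \<le> \<rho>^2" using \<delta> by (simp add: divide_le_eq power_mult_distrib)
      then show ?thesis using k by (simp add: mult.commute mult_left_mono times_divide_eq_right[symmetric] del: times_divide_eq_right)
    qed
    finally have "real_of_int (\<Sum>j<M. \<bar>v j\<bar>) \<le> (\<rho>^2 + 3/2) * real k" by (simp add: algebra_simps)
    also have "\<dots> \<le> real \<beta> * real k" using \<beta> by (intro mult_right_mono) auto
    finally have "(\<Sum>j<M. \<bar>v j\<bar>) \<le> int (\<beta>*k)" by (simp del: of_int_sum) (metis of_int_le_iff of_int_of_nat_eq of_nat_mult)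
    moreover have "\<forall>j\<ge>M. v j = 0" unfolding v \<phi>_def by simp
    ultimately show "v \<in> Vset M (\<beta>*k)" unfolding Vset_def by simp
  qed
  have "card S = card (\<phi> ` S)" using card_image[OF inj] by simp
  also have "\<dots> \<le> card (Vset M (\<beta>*k))" using Vset_card by (intro card_mono into) auto
  also have "\<dots> \<le> (2*M + \<beta>*k) choose (\<beta>*k)" using Vset_card by auto
  finally show ?thesis .
qed



lemma pow_le_exp_fact: "real s ^ s / fact s \<le> exp (real s)"
proof -
  have sm: "(\<lambda>m. real s ^ m /\<^sub>R fact m) sums exp (real s)" by (rule exp_converges)
  have "(\<Sum>m\<in>{s}. real s ^ m /\<^sub>R fact m) \<le> (\<Sum>m. real s ^ m /\<^sub>R fact m)"
    by (rule sum_le_suminf) (use sm sums_summable in auto)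
  then show ?thesis using sums_unique[OF sm] by (simp add: divide_inverse mult.commute)
qed

lemma binom_exp_bound: assumes "s \<ge> 1" shows "real (n choose s) \<le> (exp 1 * real n / real s) ^ s"
proof -
  have a: "real (n choose s) * fact s \<le> real n ^ s"
    using binomial_fact_pow[of n s] by (metis of_nat_fact of_nat_le_iff of_nat_mult of_nat_power)
  have b: "real s ^ s \<le> exp (real s) * fact s"
    using pow_le_exp_fact[of s] by (simp add: divide_le_eq)
  have sp: "real s > 0" using assms by simp
  have "real (n choose s) * real s ^ s \<le> real (n choose s) * (exp (real s) * fact s)"
    using b by (intro mult_left_mono) auto
  also have "\<dots> = exp (real s) * (real (n choose s) * fact s)" by simp
  also have "\<dots> \<le> exp (real s) * real n ^ s" using a by (intro mult_left_mono) auto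
  finally have "real (n choose s) \<le> exp (real s) * real n ^ s / real s ^ s"
    using sp by (simp add: le_divide_eq)
  also have "\<dots> = (exp 1 * real n / real s) ^ s"
    by (simp add: power_divide power_mult_distrib exp_of_nat_mult[symmetric])
  finally show ?thesis .
qed

lemma ln_le_sqrt: assumes "z > 0" shows "ln z \<le> 2 * (sqrt z - 1)"
proof -
  have "ln z = 2 * ln (sqrt z)" using assms by (simp add: ln_sqrt)
  also have "\<dots> \<le> 2 * (sqrt z - 1)" using assms by (intro mult_left_mono ln_le_minus_one) auto
  finally show ?thesis .
qed

lemma param_bound:
  fixes T :: real assumes "T \<ge> 1"
  defines "x \<equiv> 1 / (400 * (1 + 8*T))"
  shows "x * (1 + ln (1 + 8*T/x)) \<le> 1/10"
proof -
  have xp: "x > 0" "x \<le> 1" using assms unfolding x_def by (auto simp: field_simps)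
  have yp: "1 + 8*T/x > 0" using xp assms by (simp add: add_pos_nonneg)
  have "x * (1 + ln (1 + 8*T/x)) \<le> x * (1 + 2 * (sqrt (1 + 8*T/x) - 1))"
    using ln_le_sqrt[OF yp] xp by (intro mult_left_mono) auto
  also have "\<dots> \<le> 2 * (x * sqrt (1 + 8*T/x))" using xp by (simp add: algebra_simps)
  also have "x * sqrt (1 + 8*T/x) = sqrt (x^2 + 8*T*x)"
  proof -
    have "x * sqrt (1 + 8*T/x) = sqrt (x^2) * sqrt (1 + 8*T/x)" using xp by simp
    also have "\<dots> = sqrt (x^2 * (1 + 8*T/x))" by (simp add: real_sqrt_mult)
    also have "x^2 * (1 + 8*T/x) = x^2 + 8*T*x" using xp by (simp add: field_simps power2_eq_square)
    finally show ?thesis .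
  qed
  also have "\<dots> \<le> sqrt (x * (1 + 8*T))"
  proof -
    have "x^2 \<le> x" using xp by (simp add: power2_eq_square mult_le_one mult_left_le)
    then show ?thesis by (simp add: algebra_simps)
  qed
  also have "x * (1 + 8*T) = 1/400" unfolding x_def using assms by (simp add: field_simps)
  also have "sqrt (1/400::real) = 1/20" by (simp add: real_sqrt_divide)
  finally show ?thesis by simp
qed

lemma ln2_half: "ln (2::real) \<ge> 1/2"
proof -
  have "ln (1/2::real) \<le> 1/2 - 1" by (rule ln_le_minus_one) auto
  then show ?thesis by (simp add: ln_div)
qed



theorem theorem2:
  fixes T c1 c2 \<epsilon> \<mu> :: real
  assumes "T \<ge> 1" and "0 < c1" and "c1 \<le> c2"
    and "0 < \<epsilon>" and "\<epsilon> < 1/2" and "0 < \<mu>"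
  shows "\<exists>C1 C2 N0. 0 < C1 \<and> 0 < C2 \<and>
    (\<forall>N::nat \<ge> N0. \<forall>(\<tau>::real) (A::nat \<Rightarrow> nat \<Rightarrow> real).
       (let M = nat \<lceil>T * log 2 (real N)\<rceil> in
         c1 * Qinv \<epsilon> / \<mu> \<le> \<tau> \<and> \<tau> \<le> c2 * Qinv \<epsilon> / \<mu> \<and>
         (\<forall>i<N. col_norm M A i \<le> \<tau>) \<and> achieves_error \<epsilon> \<mu> M N A
         \<longrightarrow> C1 * real N * log 2 (real N) \<le> real (l0_cost M N A) \<and>
             real (l0_cost M N A) \<le> C2 * real N * log 2 (real N)))"
proof -
  note T = assms(1)
  define \<rho> where "\<rho> = c2/2"
  define \<beta> :: nat where "\<beta> = nat \<lceil>\<rho>^2\<rceil> + 2"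
  have \<beta>: "\<rho>^2 + 3/2 \<le> real \<beta>" unfolding \<beta>_def by linarith
  have "\<beta> \<ge> 2" unfolding \<beta>_def by simp
  then have \<beta>pos: "real \<beta> \<ge> 1" by simp
  define x where "x = 1/(400*(1+8*T))"
  have xpos: "x > 0" using T unfolding x_def by (simp add: add_pos_nonneg)
  have xb: "x * (1 + ln (1 + 8*T/x)) \<le> 1/10" using param_bound[OF T] unfolding x_def .
  define \<gamma> where "\<gamma> = x / real \<beta>"
  have \<gamma>pos: "\<gamma> > 0" using xpos \<beta>pos unfolding \<gamma>_def by simp
  have \<beta>\<gamma>: "real \<beta> * \<gamma> = x" using \<beta>pos unfolding \<gamma>_def by simp
  define N0 :: nat where "N0 = nat \<lceil>2 powr (2 + 2/\<gamma>)\<rceil>"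
  have q: "0 < Qinv \<epsilon>" "\<And>y. Qfun y \<le> \<epsilon> \<Longrightarrow> Qinv \<epsilon> \<le> y"
    using Qinv_prop[OF assms(4,5)] by auto
  define \<delta> where "\<delta> = 2 * Qinv \<epsilon> / \<mu>"
  have \<delta>pos: "\<delta> > 0" using q assms(6) unfolding \<delta>_def by simp
  have main: "\<forall>N::nat \<ge> N0. \<forall>(\<tau>::real) (A::nat \<Rightarrow> nat \<Rightarrow> real).
       (let M = nat \<lceil>T * log 2 (real N)\<rceil> in
         c1 * Qinv \<epsilon> / \<mu> \<le> \<tau> \<and> \<tau> \<le> c2 * Qinv \<epsilon> / \<mu> \<and>
         (\<forall>i<N. col_norm M A i \<le> \<tau>) \<and> achieves_error \<epsilon> \<mu> M N A
         \<longrightarrow> \<gamma>/2 * real N * log 2 (real N) \<le> real (l0_cost M N A) \<and>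
             real (l0_cost M N A) \<le> (2*T) * real N * log 2 (real N))"
  proof (intro allI impI)
    fix N :: nat and \<tau> :: real and A :: "nat \<Rightarrow> nat \<Rightarrow> real"
    assume N: "N \<ge> N0"
    define ll where "ll = log 2 (real N)"
    define M where "M = nat \<lceil>T * ll\<rceil>"
    have NN0: "2 powr (2 + 2/\<gamma>) \<le> real N"
    proof -
      have "real N0 \<le> real N" using N by simp
      then show ?thesis using real_nat_ceiling_ge[of "2 powr (2 + 2/\<gamma>)"] unfolding N0_def by (rule order_trans[rotated])
    qed
    have Npos: "real N > 0" using NN0 powr_gt_zero[of 2 "2 + 2/\<gamma>"] by linarith
    have ll: "2 + 2/\<gamma> \<le> ll" unfolding ll_def using NN0 Npos by (simp add: le_log_iff)
    have ll2: "ll \<ge> 2" using ll \<gamma>pos by (smt (verit) divide_pos_pos)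
    have \<gamma>ll: "\<gamma> * ll \<ge> 2"
    proof -
      have "\<gamma> * (2 + 2/\<gamma>) \<le> \<gamma> * ll" using ll \<gamma>pos by (intro mult_left_mono) auto
      moreover have "\<gamma> * (2 + 2/\<gamma>) = 2*\<gamma> + 2" using \<gamma>pos by (simp add: field_simps)
      ultimately show ?thesis using \<gamma>pos by linarith
    qed
    have "1 * 2 \<le> T * ll" using T ll2 by (intro mult_mono) auto
    then have Tll: "T * ll \<ge> 1" by simp
    have Mle: "real M \<le> 2 * T * ll"
    proof -
      have "real M \<le> T * ll + 1" unfolding M_def using Tll by linarith
      then show ?thesis using Tll by linarith
    qed
    show "let M = nat \<lceil>T * log 2 (real N)\<rceil> in
         c1 * Qinv \<epsilon> / \<mu> \<le> \<tau> \<and> \<tau> \<le> c2 * Qinv \<epsilon> / \<mu> \<and>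
         (\<forall>i<N. col_norm M A i \<le> \<tau>) \<and> achieves_error \<epsilon> \<mu> M N A
         \<longrightarrow> \<gamma>/2 * real N * log 2 (real N) \<le> real (l0_cost M N A) \<and>
             real (l0_cost M N A) \<le> (2*T) * real N * log 2 (real N)"
      unfolding Let_def ll_def[symmetric] M_def[symmetric]
    proof (intro impI, elim conjE)
      assume h2: "\<tau> \<le> c2 * Qinv \<epsilon> / \<mu>" and norm: "\<forall>i<N. col_norm M A i \<le> \<tau>"
        and ach: "achieves_error \<epsilon> \<mu> M N A"
      define P where "P = {(j, i). j < M \<and> i < N \<and> A j i \<noteq> 0}"
      have Psub: "P \<subseteq> {..<M} \<times> {..<N}" unfolding P_def by auto
      have finP: "finite P" using finite_subset[OF Psub] by simp
      have l0P: "l0_cost M N A = card P" unfolding l0_cost_def P_def ..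
      have "card P \<le> M * N" using card_mono[OF _ Psub] by (simp add: card_cartesian_product)
      then have "real (l0_cost M N A) \<le> real M * real N" unfolding l0P
        by (metis of_nat_le_iff of_nat_mult)
      also have "\<dots> \<le> 2 * T * ll * real N" using Mle Npos by (intro mult_right_mono) auto
      finally have upper: "real (l0_cost M N A) \<le> (2*T) * real N * ll" by (simp add: algebra_simps)
      have dist: "\<forall>i<N. \<forall>i'<N. i \<noteq> i' \<longrightarrow> \<delta> \<le> col_dist M A i i'"
      proof (intro allI impI)
        fix i i' assume "i < N" "i' < N" "i \<noteq> i'"
        then have "Qfun (\<mu> * col_dist M A i i' / 2) \<le> \<epsilon>"
          using ach unfolding achieves_error_def pairwise_error_def by blast
        then have "Qinv \<epsilon> \<le> \<mu> * col_dist M A i i' / 2" by (rule q(2))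
        then show "\<delta> \<le> col_dist M A i i'" unfolding \<delta>_def using assms(6)
          by (simp add: field_simps)
      qed
      have \<tau>\<rho>: "\<tau> \<le> \<rho> * \<delta>" using h2 unfolding \<rho>_def \<delta>_def by simp
      define k where "k = nat \<lfloor>\<gamma> * ll\<rfloor>"
      have k1: "k \<ge> 1" unfolding k_def using \<gamma>ll by linarith
      have kle: "real k \<le> \<gamma> * ll" unfolding k_def using \<gamma>ll by linarith
      have kge: "real k + 1 \<ge> \<gamma> * ll" unfolding k_def using \<gamma>ll by linarith
      define S where "S = {i. i < N \<and> card {j. j<M \<and> A j i \<noteq> 0} \<le> k}"
      define H where "H = {i. i < N \<and> \<not> card {j. j<M \<and> A j i \<noteq> 0} \<le> k}"
      define L where "L = \<beta> * k"
      have cS: "card S \<le> (2*M + L) choose L" unfolding L_def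
        by (rule light_card[OF \<delta>pos k1 \<tau>\<rho> \<beta>]) (use norm dist in \<open>auto simp: S_def\<close>)
      have Lle: "real L \<le> x * ll"
      proof -
        have "real L = real \<beta> * real k" unfolding L_def by simp
        also have "\<dots> \<le> real \<beta> * (\<gamma> * ll)" using kle by (intro mult_left_mono) auto
        also have "\<dots> = (real \<beta> * \<gamma>) * ll" by simp
        finally show ?thesis unfolding \<beta>\<gamma> .
      qed
      have Lge: "real L \<ge> x * ll / 2"
      proof -
        have "\<gamma> * ll / 2 \<le> real k" using kge \<gamma>ll by linarith
        then have "real \<beta> * (\<gamma> * ll / 2) \<le> real \<beta> * real k" by (intro mult_left_mono) auto
        moreover have "real \<beta> * (\<gamma> * ll / 2) = x * ll / 2"
          by (subst \<beta>\<gamma>[symmetric]) simp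
        moreover have "real L = real \<beta> * real k" unfolding L_def by simp
        ultimately show ?thesis by linarith
      qed
      have "x * ll > 0" using xpos ll2 by simp
      then have Lpos: "real L > 0" using Lge by linarith
      define r where "r = exp 1 * real (2*M + L) / real L"
      have cb: "real ((2*M + L) choose L) \<le> r ^ L"
        unfolding r_def by (rule binom_exp_bound) (use Lpos in simp)
      have ratio: "real (2*M + L) / real L \<le> 1 + 8*T/x"
      proof -
        have "real (2*M + L) / real L = 1 + 2 * real M / real L" using Lpos by (simp add: field_simps)
        also have "2 * real M / real L \<le> (4 * T * ll) / (x * ll / 2)"
          using Mle Lge Lpos xpos ll2 T by (intro frac_le) auto
        also have "(4 * T * ll) / (x * ll / 2) = 8*T/x" using ll2 xpos by (simp add: field_simps)
        finally show ?thesis by simp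
      qed
      have rpos: "r > 0" unfolding r_def using Lpos by simp
      have lnr: "ln r \<le> 1 + ln (1 + 8*T/x)"
      proof -
        have "ln r = 1 + ln (real (2*M + L) / real L)" unfolding r_def using Lpos
          by (simp add: ln_mult ln_div)
        also have "\<dots> \<le> 1 + ln (1 + 8*T/x)"
        proof -
          have "0 < real (2*M + L) / real L" using Lpos by simp
          then show ?thesis using ratio by (simp only: add_le_cancel_left ln_le_cancel_iff ln_mono)
        qed
        finally show ?thesis .
      qed
      have lnr0: "ln r \<ge> 0"
      proof -
        have "real (2*M + L) / real L \<ge> 1" using Lpos by simp
        then have "exp 1 * 1 \<le> exp 1 * (real (2*M + L) / real L)" by (intro mult_left_mono) auto
        then have "r \<ge> exp 1" unfolding r_def by simp
        moreover have "exp (1::real) \<ge> 1" by simp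
        ultimately have "r \<ge> 1" by linarith
        then show ?thesis by simp
      qed
      have "real L * ln r \<le> x * ll * (1 + ln (1 + 8*T/x))"
        using Lle lnr lnr0 xpos ll2 by (intro mult_mono) auto
      also have "\<dots> = ll * (x * (1 + ln (1 + 8*T/x)))" by simp
      also have "\<dots> \<le> ll * (1/10)" using xb ll2 by (intro mult_left_mono) auto
      also have "\<dots> \<le> ln (real N / 2)"
      proof -
        have lnN: "ln (real N) = ll * ln 2" unfolding ll_def using Npos by (simp add: log_def)
        have "(ll - 1) * (1/2) \<le> (ll - 1) * ln 2" using ln2_half ll2 by (intro mult_left_mono) auto
        then have a: "(ll - 1)/2 \<le> ll * ln 2 - ln 2" by (simp add: algebra_simps)
        have b: "ln (real N / 2) = ll * ln 2 - ln 2" using Npos lnN by (simp add: ln_div)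
        have c: "ll * (1/10) = ll/10" by simp
        have d: "ll/10 \<le> (ll - 1)/2" using ll2 by simp
        show ?thesis unfolding b c using order_trans[OF d a] .
      qed
      finally have lnb: "real L * ln r \<le> ln (real N / 2)" .
      have "r ^ L = exp (real L * ln r)" using rpos by (simp add: exp_of_nat_mult[symmetric] exp_ln ln_realpow[symmetric])
      also have "\<dots> \<le> exp (ln (real N / 2))" using lnb by simp
      also have "\<dots> = real N / 2" using Npos by simp
      finally have rN: "r ^ L \<le> real N / 2" .
      have "real (card S) \<le> real ((2*M + L) choose L)" using cS by (simp only: of_nat_le_iff)
      then have cSN: "real (card S) \<le> real N / 2" using cb rN by linarith
      have part: "card S + card H = N"
      proof -
        have u: "S \<union> H = {..<N}" and d: "S \<inter> H = {}" unfolding S_def H_def by auto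
        have "finite S" "finite H" unfolding S_def H_def by auto
        then have "card (S \<union> H) = card S + card H" using d by (rule card_Un_disjoint)
        then show ?thesis unfolding u by simp
      qed
      have "real (card S) + real (card H) = real N" using part by (metis of_nat_add)
      then have cH: "real (card H) \<ge> real N / 2" using cSN by linarith
      have finH: "finite H" unfolding H_def by simp
      define U where "U = (\<Union>i\<in>H. (\<lambda>j. (j, i)) ` {j. j<M \<and> A j i \<noteq> 0})"
      have UP: "U \<subseteq> P" unfolding U_def P_def H_def by auto
      have cU: "card U = (\<Sum>i\<in>H. card {j. j<M \<and> A j i \<noteq> 0})"
      proof -
        have "card U = (\<Sum>i\<in>H. card ((\<lambda>j. (j, i)) ` {j. j<M \<and> A j i \<noteq> 0}))"
          unfolding U_def by (rule card_UN_disjoint) (use finH in auto)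
        also have "\<dots> = (\<Sum>i\<in>H. card {j. j<M \<and> A j i \<noteq> 0})"
          by (intro sum.cong refl card_image) (auto simp: inj_on_def)
        finally show ?thesis .
      qed
      have "card H * (k+1) \<le> (\<Sum>i\<in>H. card {j. j<M \<and> A j i \<noteq> 0})"
      proof -
        have "(\<Sum>i\<in>H. k+1) \<le> (\<Sum>i\<in>H. card {j. j<M \<and> A j i \<noteq> 0})"
          by (intro sum_mono) (auto simp: H_def)
        then show ?thesis by simp
      qed
      also have "\<dots> \<le> card P" using cU card_mono[OF finP UP] by simp
      finally have "real (card H) * (real k + 1) \<le> real (l0_cost M N A)" unfolding l0P
        by (metis of_nat_Suc of_nat_le_iff of_nat_mult Suc_eq_plus1 add.commute)
      moreover have "real N / 2 * (\<gamma> * ll) \<le> real (card H) * (real k + 1)"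
        using cH kge \<gamma>ll Npos by (intro mult_mono) auto
      ultimately have lower: "\<gamma>/2 * real N * ll \<le> real (l0_cost M N A)" by (simp add: algebra_simps)
      show "\<gamma>/2 * real N * ll \<le> real (l0_cost M N A) \<and> real (l0_cost M N A) \<le> 2 * T * real N * ll"
        using lower upper by simp
    qed
  qed
  show ?thesis
    by (rule exI[of _ "\<gamma>/2"], rule exI[of _ "2*T"], rule exI[of _ N0]) (use main \<gamma>pos T in auto)
qed


end
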